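(* Let $K$ be a field of characteristic zero, $m\in K[x,y]$ irreducible over $K(x)$ with $n=\deg_y(m)$, and $A=K(x)[y]/\langle m\rangle$ equipped with the derivation $'$ extending $d/dx$. Let $W=(\omega_1,\dots,\omega_n)$ be a suitable basis of $A$ with $e\in K[x]$, $M=(m_{i,j})\in K[x]^{n\times n}$ such that $eW'=MW$ and $\gcd(e,m_{1,1},\dots,m_{n,n})=1$. Let $h=\sum_{i=1}^n\frac{h_i}{de}\omega_i$ with $h_1,\dots,h_n,d\in K[x]$, $\gcd(d,e)=\gcd(h_1,\dots,h_n,d)=1$ and $d$ squarefree. Let $U$ be an integral basis of $A$ and $T\in K[x]^{n\times n}$ with $W=TU$. Suppose there exist $u\in K[x]$ and $q_1,\dots,q_n\in K[x]$ with $\gcd(q_1,\dots,q_n,u)=1$ and \[h=\Big(\sum_{i=1}^n\frac{q_i}{u}\omega_i\Big)'.\] Then $u$ divides $\det(T)$, and hence $u^2$ divides $\operatorname{Disc}(W)/\operatorname{Disc}(U)$ in $K[x]$.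
   Context: An element $f\in A$ is integral if for every $a\in\bar K$ (algebraic closure of $K$) all $n$ Puiseux series expansions of $f$ at $a$ (obtained by substituting the $n$ roots of $m$ in $\bigcup_{r\ge1}\bar K((\,(x-a)^{1/r}))$ for $y$) have nonnegative valuation (least exponent). An integral basis is a basis of the $K[x]$-module of integral elements of $A$. A suitable basis is a $K(x)$-basis of $A$ consisting of integral elements for which the normalized $e$ above is squarefree. For a tuple $W=(\omega_1,\dots,\omega_n)$, $\operatorname{Disc}(W)=\det\big((\operatorname{Tr}(\omega_i\omega_j))_{i,j}\big)$, where $\operatorname{Tr}:A\to K(x)$ is the trace map. *)

theory Defs
  imports "HOL-Algebra.Algebraic_Closure_Type"
          "HOL-Computational_Algebra.Formal_Laurent_Series"
          "HOL-Computational_Algebra.Squarefree"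
          "Jordan_Normal_Form.Determinant"
begin

text \<open>The bivariate polynomial m in K[x,y] is an element of 'a poly poly (a polynomial in y with
  coefficients in K[x]).  The algebra A = K(x)[y]/<m> is represented by the polynomials in y over
  K(x) of degree < n = deg_y m (canonical representatives modulo m).\<close>

definition liftm :: "'a::field_gcd poly poly \<Rightarrow> 'a poly fract poly" where
  "liftm m = map_poly to_fract m"

definition A_carrier :: "'a::field_gcd poly poly \<Rightarrow> 'a poly fract poly set" where
  "A_carrier m = {f. degree f < degree m}"

definition A_mult :: "'a::field_gcd poly poly \<Rightarrow> 'a poly fract poly \<Rightarrow> 'a poly fract poly \<Rightarrow> 'a poly fract poly" where
  "A_mult m f g = (f * g) mod liftm m"

definition rf_deriv :: "'a::field_gcd poly fract \<Rightarrow> 'a poly fract" where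
  "rf_deriv f = (case quot_of_fract f of (p, q) \<Rightarrow> Fract (pderiv p * q - p * pderiv q) (q ^ 2))"

definition is_derivation :: "'a::field_gcd poly poly \<Rightarrow> ('a poly fract poly \<Rightarrow> 'a poly fract poly) \<Rightarrow> bool" where
  "is_derivation m D \<longleftrightarrow>
     (\<forall>f\<in>A_carrier m. D f \<in> A_carrier m) \<and>
     (\<forall>f\<in>A_carrier m. \<forall>g\<in>A_carrier m. D (f + g) = D f + D g) \<and>
     (\<forall>f\<in>A_carrier m. \<forall>g\<in>A_carrier m.
        D (A_mult m f g) = A_mult m (D f) g + A_mult m f (D g)) \<and>
     (\<forall>c. D [:c:] = [:rf_deriv c:])"

definition lincomb :: "nat \<Rightarrow> (nat \<Rightarrow> 'a::field_gcd poly fract) \<Rightarrow> (nat \<Rightarrow> 'a poly fract poly) \<Rightarrow> 'a poly fract poly" where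
  "lincomb n c W = (\<Sum>i<n. smult (c i) (W i))"

definition is_basis :: "'a::field_gcd poly poly \<Rightarrow> (nat \<Rightarrow> 'a poly fract poly) \<Rightarrow> bool" where
  "is_basis m W \<longleftrightarrow>
     (\<forall>i<degree m. W i \<in> A_carrier m) \<and>
     (\<forall>c. lincomb (degree m) c W = 0 \<longrightarrow> (\<forall>i<degree m. c i = 0)) \<and>
     (\<forall>f\<in>A_carrier m. \<exists>c. f = lincomb (degree m) c W)"

definition coords :: "'a::field_gcd poly poly \<Rightarrow> (nat \<Rightarrow> 'a poly fract poly) \<Rightarrow> 'a poly fract poly \<Rightarrow> nat \<Rightarrow> 'a poly fract" where
  "coords m W f = (THE c. f = lincomb (degree m) c W \<and> (\<forall>i\<ge>degree m. c i = 0))"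

text \<open>A Puiseux series in (x - a)^(1/r) with coefficients in the algebraic
  closure of K is a formal Laurent series in t, where x = a + t^r.\<close>
definition subst_rf :: "'a::field_gcd alg_closure \<Rightarrow> nat \<Rightarrow> 'a poly fract \<Rightarrow> 'a alg_closure fls" where
  "subst_rf a r f = (case quot_of_fract f of (p, q) \<Rightarrow>
      poly (map_poly (\<lambda>c. fls_const (to_ac c)) p) (fls_const a + fls_X ^ r) /
      poly (map_poly (\<lambda>c. fls_const (to_ac c)) q) (fls_const a + fls_X ^ r))"

definition puiseux_root :: "'a::field_gcd poly poly \<Rightarrow> 'a alg_closure \<Rightarrow> nat \<Rightarrow> 'a alg_closure fls \<Rightarrow> bool" where
  "puiseux_root m a r phi \<longleftrightarrow> poly (map_poly (subst_rf a r) (liftm m)) phi = 0"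

definition integral :: "'a::field_gcd poly poly \<Rightarrow> 'a poly fract poly \<Rightarrow> bool" where
  "integral m f \<longleftrightarrow>
     (\<forall>a r phi. r \<ge> 1 \<longrightarrow> puiseux_root m a r phi \<longrightarrow>
        fls_subdegree (poly (map_poly (subst_rf a r) f) phi) \<ge> 0)"

definition integral_basis :: "'a::field_gcd poly poly \<Rightarrow> (nat \<Rightarrow> 'a poly fract poly) \<Rightarrow> bool" where
  "integral_basis m U \<longleftrightarrow> is_basis m U \<and> (\<forall>i<degree m. integral m (U i)) \<and>
     (\<forall>f\<in>A_carrier m. integral m f \<longrightarrow> (\<exists>c. f = lincomb (degree m) (\<lambda>i. to_fract (c i)) U))"

text \<open>normalized e: the monic least common denominator of the entries of the matrix
  expressing W' in terms of W\<close>
definition norm_e :: "'a::field_gcd poly poly \<Rightarrow> ('a poly fract poly \<Rightarrow> 'a poly fract poly) \<Rightarrow> (nat \<Rightarrow> 'a poly fract poly) \<Rightarrow> 'a poly" where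
  "norm_e m D W = Lcm {snd (quot_of_fract (coords m W (D (W i)) j)) | i j. i < degree m \<and> j < degree m}"

definition suitable_basis :: "'a::field_gcd poly poly \<Rightarrow> ('a poly fract poly \<Rightarrow> 'a poly fract poly) \<Rightarrow> (nat \<Rightarrow> 'a poly fract poly) \<Rightarrow> bool" where
  "suitable_basis m D W \<longleftrightarrow> is_basis m W \<and> (\<forall>i<degree m. integral m (W i)) \<and>
     squarefree (norm_e m D W)"

text \<open>trace of multiplication by f, computed in the basis 1, y, ..., y^(n-1)\<close>
definition A_trace :: "'a::field_gcd poly poly \<Rightarrow> 'a poly fract poly \<Rightarrow> 'a poly fract" where
  "A_trace m f = (\<Sum>i<degree m. coeff (A_mult m f (monom 1 i)) i)"

definition Disc :: "'a::field_gcd poly poly \<Rightarrow> (nat \<Rightarrow> 'a poly fract poly) \<Rightarrow> 'a poly fract" where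
  "Disc m W = det (mat (degree m) (degree m) (\<lambda>(i, j). A_trace m (A_mult m (W i) (W j))))"

end

theory Submission
  imports Defs "Jordan_Normal_Form.Char_Poly"
begin

lemma fls_const_hom: "comm_ring_hom (fls_const :: 'b::comm_ring_1 \<Rightarrow> 'b fls)"
  by unfold_locales (simp_all add: fls_plus_const[symmetric])

interpretation flsc: map_poly_comm_ring_hom "fls_const :: 'b::comm_ring_1 \<Rightarrow> 'b fls"
  by (unfold_locales) (simp_all add: fls_plus_const[symmetric])

lemma G1: "poly (map_poly fls_const (q::'b::field poly)) (fls_const a + fls_X ^ r)
   = fps_to_fls (poly (map_poly fps_const q) (fps_const a + fps_X ^ r))"
  by (induction q) (simp_all add: map_poly_pCons fls_times_fps_to_fls fps_to_fls_power)

lemma G2: "r \<ge> 1 \<Longrightarrow> fps_nth (poly (map_poly fps_const (q::'b::field poly)) (fps_const a + fps_X ^ r)) 0 = poly q a"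
  by (induction q) (simp_all add: map_poly_pCons)

lemma G4: "fls_subdegree (poly (map_poly fls_const (q::'b::field poly)) (fls_const a + fls_X ^ r)) \<ge> 0"
  unfolding G1 by (rule fls_subdegree_fls_to_fps_gt0)

lemma G3:
  fixes q :: "'b::field poly"
  assumes r: "r \<ge> 1" and q: "q \<noteq> 0"
  shows "poly (map_poly fls_const q) (fls_const a + fls_X ^ r) \<noteq> 0 \<and>
         fls_subdegree (poly (map_poly fls_const q) (fls_const a + fls_X ^ r)) = int r * int (order a q)"
proof -
  obtain q1 where q1: "q = [:-a,1:] ^ order a q * q1" and nd: "\<not> [:-a,1:] dvd q1"
    using order_decomp[OF q] by blast
  have pq1: "poly q1 a \<noteq> 0" using nd by (simp add: poly_eq_0_iff_dvd)
  define F where "F = poly (map_poly fls_const q1) (fls_const a + fls_X ^ r)"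
  have FF: "F = fps_to_fls (poly (map_poly fps_const q1) (fps_const a + fps_X ^ r))" unfolding F_def G1 ..
  have F2: "fps_nth (poly (map_poly fps_const q1) (fps_const a + fps_X ^ r)) 0 \<noteq> 0" 
    using pq1 G2[OF r, of q1 a] by simp
  have F0: "F \<noteq> 0" using F2 FF by auto
  have Fs: "fls_subdegree F = 0" using F2 FF by (simp add: fls_subdegree_fls_to_fps)
  have lin: "poly (map_poly fls_const [:-a,1:]) (fls_const a + fls_X ^ r) = (fls_X ^ r :: 'b fls)"
    by (simp add: map_poly_pCons)
  have "poly (map_poly fls_const q) (fls_const a + fls_X ^ r) = 
     poly (map_poly fls_const ([:-a,1:] ^ order a q * q1)) (fls_const a + fls_X ^ r)"
    by (rule arg_cong[where f="\<lambda>q. poly (map_poly fls_const q) (fls_const a + fls_X ^ r)"], rule q1)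
  also have "\<dots> = (poly (map_poly fls_const [:-a,1:]) (fls_const a + fls_X ^ r)) ^ order a q * F"
    unfolding F_def flsc.hom_mult flsc.hom_power poly_mult poly_power ..
  also have "\<dots> = (fls_X ^ r) ^ order a q * F" unfolding lin ..
  finally have eq: "poly (map_poly fls_const q) (fls_const a + fls_X ^ r) = (fls_X ^ r) ^ order a q * F" .
  have "(fls_X ^ r) ^ order a q * F = fls_X ^ (r * order a q) * F" by (simp add: power_mult)
  moreover have "fls_subdegree (fls_X ^ (r * order a q) * F) = int r * int (order a q)"
    using F0 Fs by (simp add: fls_subdegree_mult_fls_X_power)
  ultimately show ?thesis using F0 eq by simp
qed


interpretation acc: map_poly_comm_ring_hom "\<lambda>c::'b::field. fls_const (to_ac c)"
  by (unfold_locales) (simp_all add: fls_plus_const[symmetric])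

locale pz =
  fixes a :: "'a::{field_char_0,field_gcd} alg_closure" and r :: nat
  assumes r: "r \<ge> 1"
begin

definition Pe :: "'a poly \<Rightarrow> 'a alg_closure fls" where
  "Pe p = poly (map_poly (\<lambda>c. fls_const (to_ac c)) p) (fls_const a + fls_X ^ r)"

lemma Pe_alt: "Pe p = poly (map_poly fls_const (map_poly to_ac p)) (fls_const a + fls_X ^ r)"
  unfolding Pe_def by (simp add: map_poly_map_poly o_def)

lemma Pe_add: "Pe (p + q) = Pe p + Pe q" unfolding Pe_def by (simp add: acc.hom_add)
lemma Pe_mult: "Pe (p * q) = Pe p * Pe q" unfolding Pe_def by (simp add: acc.hom_mult)
lemma Pe_1[simp]: "Pe 1 = 1" unfolding Pe_def by simp
lemma Pe_0[simp]: "Pe 0 = 0" unfolding Pe_def by simp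
lemma Pe_diff: "Pe (p - q) = Pe p - Pe q" unfolding Pe_def by (simp add: acc.hom_minus)
lemma Pe_pow: "Pe (p ^ k) = Pe p ^ k" unfolding Pe_def by (simp add: acc.hom_power)
lemma Pe_pCons: "Pe (pCons c p) = fls_const (to_ac c) + (fls_const a + fls_X ^ r) * Pe p"
proof -
  have "map_poly (\<lambda>c. fls_const (to_ac c)) (pCons c p) = pCons (fls_const (to_ac c)) (map_poly (\<lambda>c. fls_const (to_ac c)) p)"
    by (rule Polynomial.map_poly_pCons) simp
  thus ?thesis unfolding Pe_def by (simp only: poly_pCons)
qed

lemma Pe_val: assumes "p \<noteq> 0" 
  shows "Pe p \<noteq> 0" "fls_subdegree (Pe p) = int r * int (order a (map_poly to_ac p))"
proof -
  have "map_poly to_ac p \<noteq> 0" using assms by (simp add: map_poly_eq_0_iff)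
  from G3[OF r this, of a] show "Pe p \<noteq> 0" "fls_subdegree (Pe p) = int r * int (order a (map_poly to_ac p))"
    unfolding Pe_alt by auto
qed

lemma Pe_nonneg: "fls_subdegree (Pe p) \<ge> 0"
  unfolding Pe_alt by (rule G4)

lemma Sg_Fract: assumes q: "q \<noteq> 0" shows "subst_rf a r (Fract p q) = Pe p / Pe q"
proof -
  obtain p0 q0 where pq: "quot_of_fract (Fract p q) = (p0, q0)" by force
  have q0: "q0 \<noteq> 0" using snd_quot_of_fract_nonzero[of "Fract p q"] pq by simp
  have "Fract p0 q0 = Fract p q" using Fract_quot_of_fract[of "Fract p q"] pq by simp
  hence "p0 * q = p * q0" using q q0 by (simp add: eq_fract)
  hence "Pe p0 * Pe q = Pe p * Pe q0" by (metis Pe_mult)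
  moreover have "Pe q \<noteq> 0" "Pe q0 \<noteq> 0" using Pe_val q q0 by auto
  ultimately have "Pe p0 / Pe q0 = Pe p / Pe q" by (simp add: field_simps)
  thus ?thesis unfolding subst_rf_def pq Pe_def by simp
qed

lemma Sg_to_fract: "subst_rf a r (to_fract p) = Pe p"
  unfolding to_fract_def by (simp add: Sg_Fract)

sublocale Sg: comm_ring_hom "subst_rf a r"
proof
  show "subst_rf a r 1 = 1" using Sg_to_fract[of 1] by simp
  show "subst_rf a r 0 = 0" using Sg_to_fract[of 0] by simp
  fix x y :: "'a poly fract"
  obtain p q where x: "x = Fract p q" "q \<noteq> 0" by (cases x) auto
  obtain p' q' where y: "y = Fract p' q'" "q' \<noteq> 0" by (cases y) auto
  have nz: "Pe q \<noteq> 0" "Pe q' \<noteq> 0" using Pe_val x y by auto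
  show "subst_rf a r (x + y) = subst_rf a r x + subst_rf a r y"
    using x y nz by (simp add: Sg_Fract add_fract Pe_add Pe_mult field_simps)
  show "subst_rf a r (x * y) = subst_rf a r x * subst_rf a r y"
    using x y nz by (simp add: Sg_Fract mult_fract Pe_mult field_simps)
qed

definition dl :: "'a alg_closure fls \<Rightarrow> 'a alg_closure fls" where
  "dl F = fls_deriv F * inverse (of_nat r * fls_X ^ (r - 1))"

lemma dl_add: "dl (F + G) = dl F + dl G" unfolding dl_def by (simp add: algebra_simps)
lemma dl_mult: "dl (F * G) = dl F * G + F * dl G" unfolding dl_def by (simp add: algebra_simps)
lemma dl_const[simp]: "dl (fls_const c) = 0" unfolding dl_def by simp
lemma dl_0[simp]: "dl 0 = 0" unfolding dl_def by simp
lemma dl_Z': "dl (fls_X ^ r) = 1"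
proof -
  have nz: "(of_nat r * fls_X ^ (r - 1) :: 'a alg_closure fls) \<noteq> 0" using r by simp
  show ?thesis unfolding dl_def fls_deriv_X_power by (rule right_inverse[OF nz])
qed
lemma dl_Z: "dl (fls_const a + fls_X ^ r) = 1" by (simp add: dl_add dl_Z')

lemma dl_Pe: "dl (Pe p) = Pe (pderiv p)"
proof (induction p)
  case 0 thus ?case by simp
next
  case (pCons c p)
  have "Pe (pCons 0 (pderiv p)) = (fls_const a + fls_X ^ r) * Pe (pderiv p)" by (simp add: Pe_pCons)
  thus ?case using pCons.IH 
    by (simp add: Pe_pCons dl_add dl_mult dl_Z dl_Z' pderiv_pCons Pe_add)
qed

lemma dl_Sg: "dl (subst_rf a r c) = subst_rf a r (rf_deriv c)"
proof -
  obtain p q where pq: "quot_of_fract c = (p, q)" by force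
  have q: "q \<noteq> 0" using snd_quot_of_fract_nonzero[of c] pq by simp
  have c: "c = Fract p q" using Fract_quot_of_fract[of c] pq by simp
  have nz: "Pe q \<noteq> 0" using Pe_val q by auto
  have e1: "subst_rf a r c * Pe q = Pe p" using nz by (simp add: c Sg_Fract q)
  have "dl (subst_rf a r c * Pe q) = dl (Pe p)" using e1 by simp
  hence e2: "dl (subst_rf a r c) * Pe q + subst_rf a r c * Pe (pderiv q) = Pe (pderiv p)"
    by (simp add: dl_mult dl_Pe)
  have e1': "subst_rf a r c = Pe p / Pe q" using e1 nz by (simp add: field_simps)
  have e3: "dl (subst_rf a r c) = (Pe (pderiv p) - Pe p / Pe q * Pe (pderiv q)) / Pe q"
    using e2 nz unfolding e1' by (simp add: field_simps)
  have "rf_deriv c = Fract (pderiv p * q - p * pderiv q) (q ^ 2)" unfolding rf_deriv_def pq by simp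
  hence "subst_rf a r (rf_deriv c) = (Pe (pderiv p) * Pe q - Pe p * Pe (pderiv q)) / (Pe q)^2"
    using q by (simp add: Sg_Fract Pe_diff Pe_mult Pe_pow)
  also have "\<dots> = dl (subst_rf a r c)"
    unfolding e3 using nz by (simp add: field_simps power2_eq_square) 
  finally show ?thesis ..
qed

end



lemma deriv_formula:
  fixes s :: "'b::idom poly \<Rightarrow> 'c::comm_ring_1" and Dl :: "'b poly \<Rightarrow> 'c" and k :: "'b \<Rightarrow> 'c"
  assumes s_add: "\<And>F G. s (F+G) = s F + s G" and s_mult: "\<And>F G. s (F*G) = s F * s G"
  and d_add: "\<And>F G. Dl (F+G) = Dl F + Dl G" and d_mult: "\<And>F G. Dl (F*G) = Dl F * s G + s F * Dl G"
  and d_const: "\<And>c. Dl [:c:] = k c"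
  shows "Dl F = poly (map_poly k F) (s [:0,1:]) + Dl [:0,1:] * s (pderiv F)"
proof -
  have D0: "Dl 0 = 0" using d_add[of 0 0] by simp
  have s0: "s 0 = 0" using s_add[of 0 0] by simp
  have k0: "k 0 = 0" using d_const[of 0] D0 by simp
  show ?thesis
  proof (induction F)
    case 0 thus ?case using D0 s0 by simp
  next
    case (pCons c F)
    have e: "pCons c F = [:c:] + [:0,1:] * F" by simp
    have "Dl (pCons c F) = k c + (Dl [:0,1:] * s F + s [:0,1:] * Dl F)"
      unfolding e d_add d_mult d_const ..
    moreover have "map_poly k (pCons c F) = pCons (k c) (map_poly k F)"
      by (rule Polynomial.map_poly_pCons) (rule k0)
    moreover have "s (pderiv (pCons c F)) = s F + s [:0,1:] * s (pderiv F)"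
    proof -
      have "pderiv (pCons c F) = F + [:0,1:] * pderiv F" by (simp add: pderiv_pCons)
      thus ?thesis by (simp only: s_add s_mult)
    qed
    ultimately show ?case using pCons.IH by (simp only: poly_pCons) (simp add: algebra_simps)
  qed
qed

lemma deriv_unique:
  fixes s :: "'b::idom poly \<Rightarrow> 'c::idom" and D1 D2 :: "'b poly \<Rightarrow> 'c" and k :: "'b \<Rightarrow> 'c"
  assumes s_add: "\<And>F G. s (F+G) = s F + s G" and s_mult: "\<And>F G. s (F*G) = s F * s G"
  and d1_add: "\<And>F G. D1 (F+G) = D1 F + D1 G" and d1_mult: "\<And>F G. D1 (F*G) = D1 F * s G + s F * D1 G"
  and d1_const: "\<And>c. D1 [:c:] = k c"
  and d2_add: "\<And>F G. D2 (F+G) = D2 F + D2 G" and d2_mult: "\<And>F G. D2 (F*G) = D2 F * s G + s F * D2 G"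
  and d2_const: "\<And>c. D2 [:c:] = k c"
  and L1: "D1 L = 0" and L2: "D2 L = 0" and sL: "s (pderiv L) \<noteq> 0"
  shows "D1 F = D2 F"
proof -
  note f1 = deriv_formula[of s D1 k, OF s_add s_mult d1_add d1_mult d1_const]
  note f2 = deriv_formula[of s D2 k, OF s_add s_mult d2_add d2_mult d2_const]
  have "poly (map_poly k L) (s [:0,1:]) + D1 [:0,1:] * s (pderiv L) = 
        poly (map_poly k L) (s [:0,1:]) + D2 [:0,1:] * s (pderiv L)"
    using f1[of L] f2[of L] L1 L2 by simp
  hence "D1 [:0,1:] * s (pderiv L) = D2 [:0,1:] * s (pderiv L)" by (rule add_left_imp_eq)
  hence "D1 [:0,1:] = D2 [:0,1:]" using sL by simp
  thus ?thesis using f1[of F] f2[of F] by simp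
qed

interpretation tf: inj_idom_hom "to_fract :: 'b::idom \<Rightarrow> 'b fract"
  by unfold_locales simp_all

lemma sep_root:
  fixes L :: "'b::field poly" and s :: "'b poly \<Rightarrow> 'c::idom"
  assumes hom: "comm_ring_hom s" and sc: "\<And>c. c \<noteq> 0 \<Longrightarrow> s [:c:] \<noteq> 0"
  and irr: "irreducible L" and nz: "pderiv L \<noteq> 0" and sL: "s L = 0"
  shows "s (pderiv L) \<noteq> 0"
proof
  assume sL': "s (pderiv L) = 0"
  interpret s: comm_ring_hom s by (rule hom)
  have "\<exists>F. F \<noteq> 0 \<and> s F = 0" using sL irr by auto
  then obtain F0 where F0: "F0 \<noteq> 0" "s F0 = 0" and mn: "\<And>F. F \<noteq> 0 \<Longrightarrow> s F = 0 \<Longrightarrow> degree F0 \<le> degree F"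
    using ex_has_least_nat[where P="\<lambda>F. F \<noteq> 0 \<and> s F = 0" and m=degree] by blast
  have dv: "F0 dvd F" if "s F = 0" for F
  proof (rule ccontr)
    assume nd: "\<not> F0 dvd F"
    have "F mod F0 = F - (F div F0) * F0" by (simp add: minus_div_mult_eq_mod)
    hence "s (F mod F0) = 0" using that F0 by (simp add: s.hom_minus s.hom_mult)
    moreover have "F mod F0 \<noteq> 0" using nd by (simp add: mod_eq_0_iff_dvd)
    moreover have "degree (F mod F0) < degree F0" using degree_mod_less_degree[OF F0(1) nd] .
    ultimately show False using mn by fastforce
  qed
  have dF0: "degree F0 \<noteq> 0"
  proof
    assume "degree F0 = 0"
    then obtain c where "F0 = [:c:]" by (metis degree_eq_zeroE)
    thus False using F0 sc by auto
  qed
  obtain G where G: "L = F0 * G" using dv[OF sL] by (auto simp: dvd_def)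
  have "\<not> is_unit F0" using dF0 F0 by (simp add: is_unit_iff_degree)
  hence "is_unit G" using irreducibleD[OF irr G] by blast
  hence "degree G = 0" by (metis is_unit_iff_degree not_is_unit_0)
  moreover have "G \<noteq> 0" using G irr by auto
  ultimately have "degree L = degree F0" using G F0 by (simp add: degree_mult_eq)
  moreover have "degree F0 \<le> degree (pderiv L)" using mn[OF nz sL'] .
  moreover have "degree (pderiv L) < degree L"
  proof -
    have "degree L \<noteq> 0"
    proof
      assume "degree L = 0"
      then obtain c where "L = [:c:]" by (metis degree_eq_zeroE)
      thus False using nz by (simp add: pderiv_pCons)
    qed
    moreover have "degree (pderiv L) \<le> degree L - 1"
      by (rule degree_le) (auto simp: coeff_pderiv coeff_eq_0)
    ultimately show ?thesis by linarith
  qed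
  ultimately show False by simp
qed


lemma degree_liftm: "degree (liftm m) = degree m"
  unfolding liftm_def by simp

lemma A_carrier_mod: 
  assumes "degree m \<ge> 1" shows "F mod liftm m \<in> A_carrier m"
proof -
  have "liftm m \<noteq> 0" using assms degree_liftm[of m] by (metis degree_0 not_one_le_zero)
  thus ?thesis unfolding A_carrier_def using assms degree_liftm[of m] degree_mod_less'[of "liftm m" F]
    by (cases "F mod liftm m = 0") auto
qed

lemma of_nat_fract_poly_nz: "k \<noteq> 0 \<Longrightarrow> (of_nat k :: 'a::field_char_0 poly fract) \<noteq> 0"
proof -
  assume k: "k \<noteq> 0"
  have "(of_nat k :: 'a poly fract) = to_fract (of_nat k)" by (simp add: tf.hom_of_nat)
  moreover have "(of_nat k :: 'a poly) = [:of_nat k:]" by (simp add: of_nat_poly)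
  ultimately show ?thesis using k by simp
qed

lemma pderiv_liftm_nz:
  fixes m :: "'a::{field_char_0,field_gcd} poly poly"
  assumes "degree m \<ge> 1" shows "pderiv (liftm m) \<noteq> 0"
proof -
  let ?L = "liftm m"
  have dL: "degree ?L \<ge> 1" using assms degree_liftm[of m] by simp
  then obtain k where k: "degree ?L = Suc k" by (cases "degree ?L") auto
  have "coeff (pderiv ?L) k = of_nat (Suc k) * lead_coeff ?L" by (simp add: coeff_pderiv k)
  moreover have "lead_coeff ?L \<noteq> 0" using dL by (metis leading_coeff_0_iff degree_0 not_one_le_zero)
  ultimately have "coeff (pderiv ?L) k \<noteq> 0" using of_nat_fract_poly_nz[of "Suc k", where 'a='a] by simp
  thus ?thesis by auto
qed

locale pzm = pz a r for a :: "'a::{field_char_0,field_gcd} alg_closure" and r +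
  fixes m :: "'a poly poly" and phi :: "'a alg_closure fls" and D
  assumes root: "puiseux_root m a r phi" and irr: "irreducible (liftm m)" and der: "is_derivation m D"
begin

definition sg :: "'a poly fract poly \<Rightarrow> 'a alg_closure fls" where
  "sg F = poly (map_poly (subst_rf a r) F) phi"

sublocale Sgp: map_poly_comm_ring_hom "subst_rf a r" ..

lemma sg_add: "sg (F + G) = sg F + sg G" unfolding sg_def by (simp add: Sgp.hom_add)
lemma sg_mult: "sg (F * G) = sg F * sg G" unfolding sg_def by (simp add: Sgp.hom_mult)
lemma sg_diff: "sg (F - G) = sg F - sg G" unfolding sg_def by (simp add: Sgp.hom_minus)
lemma sg_0[simp]: "sg 0 = 0" unfolding sg_def by simp
lemma sg_const: "sg [:c:] = subst_rf a r c" unfolding sg_def by (simp add: Polynomial.map_poly_pCons)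
lemma sg_smult: "sg (smult c F) = subst_rf a r c * sg F" unfolding sg_def by (subst Polynomial.map_poly_smult) (simp_all add: Sg.hom_mult)
lemma sg_sum: "sg (sum f S) = (\<Sum>i\<in>S. sg (f i))" 
  by (induction S rule: infinite_finite_induct) (simp_all add: sg_add)
lemma sg_hom: "comm_ring_hom sg"
  by unfold_locales (simp_all add: sg_add sg_mult, simp add: sg_def)
lemma sg_L: "sg (liftm m) = 0" using root unfolding puiseux_root_def sg_def .
lemma sg_mod: "sg (F mod liftm m) = sg F"
proof -
  have "F mod liftm m = F - (F div liftm m) * liftm m" by (simp add: minus_div_mult_eq_mod)
  thus ?thesis by (simp add: sg_diff sg_mult sg_L)
qed

lemma Sg_nz: "c \<noteq> 0 \<Longrightarrow> subst_rf a r c \<noteq> 0"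
  using Sg.hom_mult[of c "inverse c"] by auto

lemma n1: "degree m \<ge> 1"
proof -
  have "liftm m \<noteq> 0" "\<not> is_unit (liftm m)" using irr by auto
  hence "degree (liftm m) \<noteq> 0" by (simp add: is_unit_iff_degree)
  thus ?thesis by (simp add: degree_liftm)
qed

lemma sgL': "sg (pderiv (liftm m)) \<noteq> 0"
  by (rule sep_root[OF sg_hom _ irr pderiv_liftm_nz[OF n1] sg_L]) (simp add: sg_const Sg_nz)

lemma D_add: "f \<in> A_carrier m \<Longrightarrow> g \<in> A_carrier m \<Longrightarrow> D (f + g) = D f + D g"
  using der unfolding is_derivation_def by blast
lemma D_mult: "f \<in> A_carrier m \<Longrightarrow> g \<in> A_carrier m \<Longrightarrow> D (A_mult m f g) = A_mult m (D f) g + A_mult m f (D g)"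
  using der unfolding is_derivation_def by blast
lemma D_const: "D [:c:] = [:rf_deriv c:]"
  using der unfolding is_derivation_def by blast
lemma D_car: "f \<in> A_carrier m \<Longrightarrow> D f \<in> A_carrier m"
  using der unfolding is_derivation_def by blast
lemma zero_car: "0 \<in> A_carrier m" using n1 by (simp add: A_carrier_def)
lemma D_0: "D 0 = 0" using D_add[OF zero_car zero_car] by (metis add.right_neutral add_left_cancel)

lemma sg_A_mult: "sg (A_mult m f g) = sg f * sg g"
  unfolding A_mult_def sg_mod sg_mult ..

lemma sg_D: assumes g: "g \<in> A_carrier m" shows "sg (D g) = dl (sg g)"
proof -
  define D1 where "D1 F = sg (D (F mod liftm m))" for F
  define D2 where "D2 F = dl (sg F)" for F
  have car: "F mod liftm m \<in> A_carrier m" for F by (rule A_carrier_mod[OF n1])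
  have "D1 g = D2 g"
  proof (rule deriv_unique[of sg D1 "\<lambda>c. subst_rf a r (rf_deriv c)" D2 "liftm m"])
    show "sg (F + G) = sg F + sg G" for F G by (rule sg_add)
    show "sg (F * G) = sg F * sg G" for F G by (rule sg_mult)
    show "D1 (F + G) = D1 F + D1 G" for F G
      unfolding D1_def poly_mod_add_left D_add[OF car car] sg_add ..
    show "D1 (F * G) = D1 F * sg G + sg F * D1 G" for F G
    proof -
      have "(F * G) mod liftm m = A_mult m (F mod liftm m) (G mod liftm m)"
        unfolding A_mult_def by (simp add: mod_mult_eq)
      thus ?thesis unfolding D1_def using D_mult[OF car car]
        by (simp add: sg_add sg_A_mult sg_mod)
    qed
    show "D1 [:c:] = subst_rf a r (rf_deriv c)" for c
    proof -
      have "[:c:] mod liftm m = [:c:]" using n1 by (simp add: mod_poly_less degree_liftm)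
      thus ?thesis unfolding D1_def by (simp add: D_const sg_const)
    qed
    show "D2 (F + G) = D2 F + D2 G" for F G unfolding D2_def sg_add dl_add ..
    show "D2 (F * G) = D2 F * sg G + sg F * D2 G" for F G unfolding D2_def sg_mult dl_mult ..
    show "D2 [:c:] = subst_rf a r (rf_deriv c)" for c unfolding D2_def sg_const dl_Sg ..
    show "D1 (liftm m) = 0" unfolding D1_def by (simp add: D_0)
    show "D2 (liftm m) = 0" unfolding D2_def sg_L by simp
    show "sg (pderiv (liftm m)) \<noteq> 0" by (rule sgL')
  qed
  moreover have "g mod liftm m = g" using g unfolding A_carrier_def
    by (simp add: mod_poly_less degree_liftm)
  ultimately show ?thesis unfolding D1_def D2_def by simp
qed

end


definition nng :: "'b::zero fls \<Rightarrow> bool" where "nng F \<longleftrightarrow> F = 0 \<or> fls_subdegree F \<ge> 0"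

lemma nng_add: "nng F \<Longrightarrow> nng G \<Longrightarrow> nng (F + G)"
  unfolding nng_def using fls_plus_subdegree[of F G] by (cases "F + G = 0") auto
lemma nng_mult: "nng F \<Longrightarrow> nng (G :: 'b::idom fls) \<Longrightarrow> nng (F * G)"
  unfolding nng_def by (cases "F = 0 \<or> G = 0") auto
lemma nng_sum: "(\<And>i. i \<in> S \<Longrightarrow> nng (f i)) \<Longrightarrow> nng (sum f S)"
  by (induction S rule: infinite_finite_induct) (auto simp: nng_add, simp_all add: nng_def)
lemma nngI: "fls_subdegree F \<ge> 0 \<Longrightarrow> nng F" unfolding nng_def by simp

context pzm begin

lemma val_bound:
  assumes g: "g \<in> A_carrier m" and p: "p \<noteq> 0" and ord: "order a (map_poly to_ac p) \<le> 1"
  and nn: "nng (Pe p * sg (D g))"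
  shows "fls_subdegree (sg g) \<ge> 0"
proof (rule ccontr)
  assume "\<not> fls_subdegree (sg g) \<ge> 0"
  hence v: "fls_subdegree (sg g) < 0" by simp
  define G where "G = sg g"
  have G0: "G \<noteq> 0" using v G_def by auto
  have dG: "fls_subdegree (fls_deriv G) = fls_subdegree G - 1"
    using v G_def by (intro fls_subdegree_deriv) simp
  have dG0: "fls_deriv G \<noteq> 0"
  proof
    assume "fls_deriv G = 0" hence "fls_subdegree G = 1" using dG by simp
    thus False using v G_def by simp
  qed
  define Q where "Q = (of_nat r * fls_X ^ (r - 1) :: 'a alg_closure fls)"
  have Q0: "Q \<noteq> 0" using r Q_def by simp
  have Qs: "fls_subdegree Q = int (r - 1)"
  proof -
    have "Q = fls_const (of_nat r) * fls_X ^ (r - 1)" unfolding Q_def by (simp add: fls_of_nat)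
    moreover have "fls_const (of_nat r :: 'a alg_closure) \<noteq> 0" using r by simp
    ultimately show ?thesis by (simp add: fls_subdegree_mult)
  qed
  have iQ0: "inverse Q \<noteq> 0" using Q0 by simp
  have iQs: "fls_subdegree (inverse Q) = - int (r - 1)" using Qs by simp
  have e: "sg (D g) = fls_deriv G * inverse Q" unfolding sg_D[OF g] dl_def G_def Q_def ..
  have P0: "Pe p \<noteq> 0" and Ps: "fls_subdegree (Pe p) = int r * int (order a (map_poly to_ac p))"
    using Pe_val[OF p] by auto
  have "Pe p * sg (D g) \<noteq> 0" unfolding e using P0 dG0 iQ0 by simp
  moreover have "fls_subdegree (Pe p * sg (D g)) = int r * int (order a (map_poly to_ac p)) + (fls_subdegree G - 1) - int (r - 1)"
    unfolding e using P0 dG0 iQ0 Ps dG iQs by simp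
  moreover have "int r * int (order a (map_poly to_ac p)) \<le> int r" using ord by (intro mult_left_le) auto
  moreover have "int (r - 1) = int r - 1" using r by simp
  moreover have "fls_subdegree G < 0" using v G_def by simp
  ultimately show False using nn unfolding nng_def by linarith
qed

end

lemma sqf_gcd_pderiv:
  fixes s :: "'a::{field_char_0,field_gcd} poly"
  assumes sq: "squarefree s" shows "gcd s (pderiv s) = 1"
proof (rule ccontr)
  assume ng: "gcd s (pderiv s) \<noteq> 1"
  have s0: "s \<noteq> 0" using sq by auto
  have "\<not> is_unit (gcd s (pderiv s))" using ng by (metis is_unit_gcd_iff)
  moreover have "gcd s (pderiv s) \<noteq> 0" using s0 by simp
  ultimately obtain p where p: "prime p" "p dvd gcd s (pderiv s)" using prime_divisor_exists by blast
  have ps: "p dvd s" and ps': "p dvd pderiv s" using p(2) dvd_trans gcd_dvd1 gcd_dvd2 by blast+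
  obtain k where k: "s = p * k" using ps by (auto simp: dvd_def)
  have "pderiv s = p * pderiv k + k * pderiv p" unfolding k by (rule pderiv_mult)
  hence "p dvd k * pderiv p" using ps' by (metis dvd_add_right_iff dvd_triv_left)
  moreover have "degree p \<noteq> 0"
  proof
    assume "degree p = 0"
    moreover have "p \<noteq> 0" using p(1) by auto
    ultimately have "is_unit p" using is_unit_iff_degree[of p] by simp
    thus False using p(1) not_prime_unit by blast
  qed
  hence "\<not> p dvd pderiv p" by (rule not_dvd_pderiv)
  ultimately have "p dvd k" using p(1) prime_dvd_mult_iff by blast
  hence "p ^ 2 dvd s" unfolding k by (simp add: power2_eq_square mult_dvd_mono)
  hence "is_unit p" using sq squarefreeD by blast
  thus False using p(1) not_prime_unit by blast
qed

interpretation tac: field_hom "to_ac :: 'b::field \<Rightarrow> 'b alg_closure"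
  by unfold_locales simp_all
interpretation tacp: map_poly_idom_hom "to_ac :: 'b::field \<Rightarrow> 'b alg_closure"
  by unfold_locales simp_all

lemma sqf_order:
  fixes s :: "'a::{field_char_0,field_gcd} poly"
  assumes sq: "squarefree s" shows "order a (map_poly to_ac s) \<le> 1"
proof (rule ccontr)
  assume o: "\<not> order a (map_poly to_ac s) \<le> 1"
  let ?S = "map_poly to_ac s"
  have s0: "s \<noteq> 0" using sq by auto
  hence S0: "?S \<noteq> 0" by (simp add: map_poly_eq_0_iff)
  have r1: "poly ?S a = 0" using o S0 by (simp add: order_root)
  have "order a ?S = Suc (order a (pderiv ?S))" by (rule order_pderiv[OF S0 r1])
  hence "order a (pderiv ?S) \<noteq> 0" using o by simp
  hence r2: "poly (pderiv ?S) a = 0" by (simp add: order_root)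
  obtain u v where "u * s + v * pderiv s = 1"
    using bezout_coefficients_fst_snd[of s "pderiv s"] sqf_gcd_pderiv[OF sq] by metis
  hence "map_poly to_ac (u * s + v * pderiv s) = 1" by simp
  hence "map_poly to_ac u * ?S + map_poly to_ac v * pderiv ?S = 1"
    by (simp add: tac.map_poly_pderiv tacp.hom_mult tacp.hom_add)
  hence "poly (map_poly to_ac u * ?S + map_poly to_ac v * pderiv ?S) a = 1" by simp
  thus False using r1 r2 by simp
qed


lemma lincomb_Suc: "lincomb (Suc k) c W = lincomb k c W + smult (c k) (W k)"
  unfolding lincomb_def by simp

lemma lincomb_carrier: "(\<And>i. i < k \<Longrightarrow> W i \<in> A_carrier m) \<Longrightarrow> degree m \<ge> 1 \<Longrightarrow> lincomb k c W \<in> A_carrier m"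
proof (induction k)
  case 0 thus ?case by (simp add: lincomb_def A_carrier_def)
next
  case (Suc k)
  have "lincomb k c W \<in> A_carrier m" using Suc by simp
  moreover have "W k \<in> A_carrier m" using Suc by simp
  ultimately have "degree (lincomb k c W) < degree m" "degree (smult (c k) (W k)) < degree m"
    unfolding A_carrier_def using degree_smult_le[of "c k" "W k"] by auto
  thus ?case unfolding lincomb_Suc A_carrier_def by (simp add: degree_add_less)
qed

lemma lincomb_diff: "lincomb k a W - lincomb k b W = lincomb k (\<lambda>i. a i - b i) W"
  unfolding lincomb_def by (simp add: sum_subtractf[symmetric] smult_diff_left)

lemma lincomb_eq:
  assumes B: "is_basis m W" and eq: "lincomb (degree m) a W = lincomb (degree m) b W" and i: "i < degree m"
  shows "a i = b i"
proof -
  have "lincomb (degree m) (\<lambda>i. a i - b i) W = 0" using eq lincomb_diff[of "degree m" a W b] by simp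
  hence "a i - b i = 0" using B i unfolding is_basis_def by blast
  thus ?thesis by simp
qed

lemma lincomb_compose:
  "lincomb k a (\<lambda>i. lincomb k (b i) U) = lincomb k (\<lambda>j. \<Sum>i<k. a i * b i j) U"
proof -
  have "lincomb k a (\<lambda>i. lincomb k (b i) U) = (\<Sum>i<k. \<Sum>j<k. smult (a i * b i j) (U j))"
    unfolding lincomb_def by (simp add: smult_sum2)
  also have "\<dots> = (\<Sum>j<k. \<Sum>i<k. smult (a i * b i j) (U j))" by (rule sum.swap)
  also have "\<dots> = lincomb k (\<lambda>j. \<Sum>i<k. a i * b i j) U"
    unfolding lincomb_def by (simp add: smult_sum)
  finally show ?thesis .
qed

lemma coords_eq:
  assumes B: "is_basis m W" and f: "f = lincomb (degree m) c W" and c0: "\<forall>i\<ge>degree m. c i = 0"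
  shows "coords m W f = c"
  unfolding coords_def
proof (rule the_equality)
  show "f = lincomb (degree m) c W \<and> (\<forall>i\<ge>degree m. c i = 0)" using f c0 by simp
  fix c' assume c': "f = lincomb (degree m) c' W \<and> (\<forall>i\<ge>degree m. c' i = 0)"
  show "c' = c"
  proof
    fix i show "c' i = c i"
      using lincomb_eq[OF B, of c' c i] c' f c0 by (cases "i < degree m") auto
  qed
qed

lemma dvd_detT:
  fixes T :: "'a::{field_char_0,field_gcd} poly mat"
  assumes T: "T \<in> carrier_mat k k" and lin: "\<forall>j<k. u * c j = (\<Sum>i<k. q i * T $$ (i, j))"
  and g: "Gcd (insert u (q ` {..<k})) = 1"
  shows "u dvd det T"
proof -
  have adj: "T * adj_mat T = det T \<cdot>\<^sub>m 1\<^sub>m k" "adj_mat T \<in> carrier_mat k k" using adj_mat[OF T] by auto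
  have ent: "(T * adj_mat T) $$ (i, l) = (\<Sum>j<k. T $$ (i, j) * adj_mat T $$ (j, l))" if "i < k" "l < k" for i l
    using T adj(2) that by (simp add: scalar_prod_def lessThan_atLeast0)
  have "u dvd det T * q l" if l: "l < k" for l
  proof -
    have "(\<Sum>i<k. q i * (T * adj_mat T) $$ (i, l)) = (\<Sum>i<k. q i * (if i = l then det T else 0))"
      using l by (intro sum.cong) (auto simp: adj(1))
    also have "\<dots> = (\<Sum>i<k. (if i = l then q l * det T else 0))" by (intro sum.cong) auto
    also have "\<dots> = det T * q l" using l by (simp add: mult.commute)
    finally have 1: "det T * q l = (\<Sum>i<k. q i * (T * adj_mat T) $$ (i, l))" ..
    have 2: "(\<Sum>i<k. q i * (T * adj_mat T) $$ (i, l)) = (\<Sum>i<k. \<Sum>j<k. q i * (T $$ (i, j) * adj_mat T $$ (j, l)))"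
      using l by (intro sum.cong refl) (simp add: ent sum_distrib_left)
    have 3: "(\<Sum>i<k. \<Sum>j<k. q i * (T $$ (i, j) * adj_mat T $$ (j, l))) = (\<Sum>j<k. \<Sum>i<k. q i * (T $$ (i, j) * adj_mat T $$ (j, l)))"
      by (rule sum.swap)
    have 4: "(\<Sum>j<k. \<Sum>i<k. q i * (T $$ (i, j) * adj_mat T $$ (j, l))) = (\<Sum>j<k. u * (c j * adj_mat T $$ (j, l)))"
    proof (intro sum.cong refl)
      fix j assume "j \<in> {..<k}"
      hence "u * c j = (\<Sum>i<k. q i * T $$ (i, j))" using lin by simp
      hence "u * c j * adj_mat T $$ (j, l) = (\<Sum>i<k. q i * T $$ (i, j)) * adj_mat T $$ (j, l)" by simp
      thus "(\<Sum>i<k. q i * (T $$ (i, j) * adj_mat T $$ (j, l))) = u * (c j * adj_mat T $$ (j, l))"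
        by (simp add: sum_distrib_right mult.assoc)
    qed
    have 5: "(\<Sum>j<k. u * (c j * adj_mat T $$ (j, l))) = u * (\<Sum>j<k. c j * adj_mat T $$ (j, l))"
      by (simp add: sum_distrib_left)
    show ?thesis unfolding 1 2 3 4 5 by simp
  qed
  moreover have "u dvd det T * u" by simp
  ultimately have "u dvd Gcd ((*) (det T) ` insert u (q ` {..<k}))" 
    by (auto intro!: Gcd_greatest)
  also have "\<dots> = normalize (det T)" unfolding Gcd_mult g by simp
  finally show ?thesis by simp
qed


lemma A_mult_add1: "A_mult m (f1 + f2) g = A_mult m f1 g + A_mult m f2 g"
  unfolding A_mult_def by (simp add: distrib_right poly_mod_add_left)
lemma A_mult_smult1: "A_mult m (smult c f) g = smult c (A_mult m f g)"
  unfolding A_mult_def by (simp add: mod_smult_left)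
lemma A_mult_comm: "A_mult m f g = A_mult m g f"
  unfolding A_mult_def by (simp add: mult.commute)
lemma A_mult_0: "A_mult m 0 g = 0" unfolding A_mult_def by simp
lemma A_trace_add: "A_trace m (f + g) = A_trace m f + A_trace m g"
  unfolding A_trace_def by (simp add: A_mult_add1 sum.distrib)
lemma A_trace_smult: "A_trace m (smult c f) = c * A_trace m f"
  unfolding A_trace_def by (simp add: A_mult_smult1 sum_distrib_left)
lemma A_trace_0: "A_trace m 0 = 0"
  unfolding A_trace_def by (simp add: A_mult_0)

lemma B_lin1: "A_trace m (A_mult m (lincomb k a U) g) = (\<Sum>i<k. a i * A_trace m (A_mult m (U i) g))"
  by (induction k) (simp_all add: lincomb_Suc lincomb_def[of 0] A_mult_0 A_trace_0 A_mult_add1 A_mult_smult1 A_trace_add A_trace_smult)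

lemma B_bil: "A_trace m (A_mult m (lincomb k a U) (lincomb k b U)) = 
   (\<Sum>i<k. \<Sum>j<k. a i * b j * A_trace m (A_mult m (U i) (U j)))"
proof -
  have "A_trace m (A_mult m (lincomb k a U) (lincomb k b U)) = (\<Sum>i<k. a i * A_trace m (A_mult m (U i) (lincomb k b U)))"
    by (rule B_lin1)
  also have "\<dots> = (\<Sum>i<k. a i * A_trace m (A_mult m (lincomb k b U) (U i)))"
    by (intro sum.cong refl) (simp add: A_mult_comm[of m "U i" "lincomb k b U" for i])
  also have "\<dots> = (\<Sum>i<k. a i * (\<Sum>j<k. b j * A_trace m (A_mult m (U j) (U i))))"
    unfolding B_lin1 ..
  also have "\<dots> = (\<Sum>i<k. \<Sum>j<k. a i * b j * A_trace m (A_mult m (U j) (U i)))"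
    by (simp add: sum_distrib_left mult.assoc)
  also have "\<dots> = (\<Sum>i<k. \<Sum>j<k. a i * b j * A_trace m (A_mult m (U i) (U j)))"
    by (intro sum.cong refl) (simp add: A_mult_comm[of m "U i" "U j" for i j])
  finally show ?thesis .
qed

lemma Disc_T:
  fixes m :: "'a::{field_char_0,field_gcd} poly poly" and T :: "'a poly mat"
  assumes T: "T \<in> carrier_mat (degree m) (degree m)"
  and WTU: "\<forall>i<degree m. W i = lincomb (degree m) (\<lambda>j. to_fract (T $$ (i, j))) U"
  shows "Disc m W = to_fract (det T) ^ 2 * Disc m U"
proof -
  define k where "k = degree m"
  define Tf where "Tf = map_mat to_fract T"
  define G where "G = mat k k (\<lambda>(i, j). A_trace m (A_mult m (U i) (U j)))"
  have Tf: "Tf \<in> carrier_mat k k" using T unfolding Tf_def k_def by simp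
  have G: "G \<in> carrier_mat k k" unfolding G_def by simp
  have eq: "mat k k (\<lambda>(i, j). A_trace m (A_mult m (W i) (W j))) = Tf * G * transpose_mat Tf"
  proof (rule eq_matI)
    fix i j assume i: "i < dim_row (Tf * G * transpose_mat Tf)" and j: "j < dim_col (Tf * G * transpose_mat Tf)"
    hence i': "i < k" and j': "j < k" using Tf G by auto
    have "(Tf * G * transpose_mat Tf) $$ (i, j) = (\<Sum>h = 0..<k. Tf $$ (i, h) * (\<Sum>l = 0..<k. G $$ (h, l) * Tf $$ (j, l)))"
      using Tf G i' j' by (simp add: scalar_prod_def)
    also have "\<dots> = (\<Sum>h<k. \<Sum>l<k. Tf $$ (i, h) * Tf $$ (j, l) * G $$ (h, l))"
      by (simp add: sum_distrib_left algebra_simps lessThan_atLeast0)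
    also have "\<dots> = A_trace m (A_mult m (W i) (W j))"
      using WTU i' j' T unfolding k_def Tf_def G_def by (simp add: B_bil)
    finally show "mat k k (\<lambda>(i, j). A_trace m (A_mult m (W i) (W j))) $$ (i, j) = (Tf * G * transpose_mat Tf) $$ (i, j)"
      using i' j' by simp
  qed (use Tf G in auto)
  have "det (Tf * G * transpose_mat Tf) = det Tf * det G * det Tf"
    using Tf G by (simp add: det_mult[of _ k] det_transpose)
  moreover have "det Tf = to_fract (det T)" unfolding Tf_def by (rule tf.hom_det)
  ultimately show ?thesis unfolding Disc_def k_def[symmetric] eq G_def[symmetric]
    by (simp add: power2_eq_square)
qed


lemma lincomb_restrict: "lincomb k (\<lambda>j. if j < k then f j else 0) W = lincomb k f W"
  unfolding lincomb_def by (intro sum.cong) auto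

lemma e_sqf:
  fixes m :: "'a::{field_char_0,field_gcd} poly poly" and e :: "'a poly" and M :: "'a poly mat"
  assumes B: "is_basis m W" and n1: "degree m \<ge> 1"
  and eWMW: "\<forall>i<degree m. smult (to_fract e) (D (W i)) = lincomb (degree m) (\<lambda>j. to_fract (M $$ (i, j))) W"
  and gcd_eM: "Gcd (insert e {M $$ (i, j) | i j. i < degree m \<and> j < degree m}) = 1"
  and sq: "squarefree (norm_e m D W)"
  shows "e \<noteq> 0 \<and> squarefree e"
proof -
  let ?n = "degree m"
  have e0: "e \<noteq> 0"
  proof
    assume e: "e = 0"
    have Mz: "M $$ (i,j) = 0" if "i < ?n" "j < ?n" for i j
    proof -
      have "lincomb ?n (\<lambda>j. to_fract (M $$ (i, j))) W = lincomb ?n (\<lambda>_. 0) W"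
        using eWMW that e by (simp add: lincomb_def)
      hence "to_fract (M $$ (i,j)) = (0 :: 'a poly fract)" using lincomb_eq[OF B _ that(2)] by blast
      thus ?thesis by simp
    qed
    have "{M $$ (i, j) | i j. i < ?n \<and> j < ?n} = {0}" using n1 Mz by fastforce
    hence S: "insert e {M $$ (i, j) | i j. i < ?n \<and> j < ?n} = {0}" using e by simp
    show False using gcd_eM unfolding S by simp
  qed
  have co: "coords m W (D (W i)) j = to_fract (M $$ (i,j)) / to_fract e" if ij: "i < ?n" "j < ?n" for i j
  proof -
    have "D (W i) = smult (inverse (to_fract e)) (smult (to_fract e) (D (W i)))" using e0 by simp
    also have "\<dots> = lincomb ?n (\<lambda>j. to_fract (M $$ (i,j)) / to_fract e) W"
      unfolding eWMW[rule_format, OF ij(1)] lincomb_def by (simp add: smult_sum2 field_simps)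
    also have "\<dots> = lincomb ?n (\<lambda>j. if j < ?n then to_fract (M $$ (i,j)) / to_fract e else 0) W"
      by (rule lincomb_restrict[symmetric])
    finally have "coords m W (D (W i)) = (\<lambda>j. if j < ?n then to_fract (M $$ (i,j)) / to_fract e else 0)"
      by (intro coords_eq[OF B]) auto
    thus ?thesis using ij by simp
  qed
  show ?thesis
  proof (intro conjI e0 squarefreeI)
    fix x assume x: "x ^ 2 dvd e"
    show "x dvd 1"
    proof (rule ccontr)
      assume nu: "\<not> x dvd 1"
      have "x \<noteq> 0" using x e0 by auto
      then obtain p where p: "prime p" "p dvd x" using prime_divisor_exists nu by blast
      have p2e: "p ^ 2 dvd e" using x p(2) by (meson dvd_power_same dvd_trans)
      have pe: "p dvd e" using p2e by (meson dvd_power dvd_trans zero_less_numeral)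
      have "\<not> p dvd Gcd (insert e {M $$ (i, j) | i j. i < ?n \<and> j < ?n})" unfolding gcd_eM using p(1) not_prime_unit by blast
      then obtain i j where ij: "i < ?n" "j < ?n" and ny: "\<not> p dvd M $$ (i,j)"
        using pe by (auto simp: dvd_Gcd_iff)
      obtain p0 b where qb: "quot_of_fract (coords m W (D (W i)) j) = (p0, b)" by force
      have b0: "b \<noteq> 0" using snd_quot_of_fract_nonzero[of "coords m W (D (W i)) j"] qb by simp
      have "Fract p0 b = coords m W (D (W i)) j" using Fract_quot_of_fract[of "coords m W (D (W i)) j"] qb by simp
      also have "\<dots> = Fract (M $$ (i,j)) e" unfolding co[OF ij] Fract_conv_to_fract ..
      finally have "p0 * e = M $$ (i,j) * b" using b0 e0 by (simp add: eq_fract)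
      hence "p ^ 2 dvd M $$ (i,j) * b" using p2e by (metis dvd_mult)
      hence p2b: "p ^ 2 dvd b" using prime_power_dvd_multD[of p 2 "M $$ (i,j)" b] p(1) ny by simp
      have "b \<in> {snd (quot_of_fract (coords m W (D (W i)) j)) | i j. i < ?n \<and> j < ?n}"
        using ij qb by force
      hence "b dvd norm_e m D W" unfolding norm_e_def by (rule dvd_Lcm)
      hence "p ^ 2 dvd norm_e m D W" using p2b by (rule dvd_trans[rotated])
      hence "is_unit p" using sq squarefreeD by blast
      thus False using p(1) not_prime_unit by blast
    qed
  qed
qed

theorem lemma9:
  fixes m :: "'a::{field_char_0,field_gcd} poly poly"
    and D :: "'a poly fract poly \<Rightarrow> 'a poly fract poly"
    and W U :: "nat \<Rightarrow> 'a poly fract poly"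
    and e d u :: "'a poly"
    and M T :: "'a poly mat"
    and hc qc :: "nat \<Rightarrow> 'a poly"
    and h :: "'a poly fract poly"
  defines "n \<equiv> degree m"
  assumes irr: "irreducible (liftm m)"
    and der: "is_derivation m D"
    and suit: "suitable_basis m D W"
    and M_carrier: "M \<in> carrier_mat n n"
    and eWMW: "\<forall>i<n. smult (to_fract e) (D (W i)) = lincomb n (\<lambda>j. to_fract (M $$ (i, j))) W"
    and gcd_eM: "Gcd (insert e {M $$ (i, j) | i j. i < n \<and> j < n}) = 1"
    and d_nz: "d \<noteq> 0"
    and h_def: "h = lincomb n (\<lambda>i. to_fract (hc i) / to_fract (d * e)) W"
    and gcd_de: "gcd d e = 1"
    and gcd_hd: "Gcd (insert d (hc ` {..<n})) = 1"
    and d_sqf: "squarefree d"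
    and U_ib: "integral_basis m U"
    and T_carrier: "T \<in> carrier_mat n n"
    and WTU: "\<forall>i<n. W i = lincomb n (\<lambda>j. to_fract (T $$ (i, j))) U"
    and u_nz: "u \<noteq> 0"
    and gcd_qu: "Gcd (insert u (qc ` {..<n})) = 1"
    and h_deriv: "h = D (lincomb n (\<lambda>i. to_fract (qc i) / to_fract u) W)"
  shows "u dvd det T \<and> (\<exists>c. Disc m W / Disc m U = to_fract (u ^ 2 * c))"
proof -
  have n1: "degree m \<ge> 1"
  proof -
    have "liftm m \<noteq> 0" "\<not> is_unit (liftm m)" using irr by auto
    hence "degree (liftm m) \<noteq> 0" by (simp add: is_unit_iff_degree)
    thus ?thesis by (simp add: degree_liftm)
  qed
  have Wb: "is_basis m W" and Wint: "\<forall>i<n. integral m (W i)" and sqn: "squarefree (norm_e m D W)"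
    using suit unfolding suitable_basis_def n_def by auto
  have Wc: "\<And>i. i < n \<Longrightarrow> W i \<in> A_carrier m" using Wb unfolding is_basis_def n_def by auto
  have Ub: "is_basis m U" using U_ib unfolding integral_basis_def by auto
  have es: "e \<noteq> 0 \<and> squarefree e"
    by (rule e_sqf[OF Wb n1 _ _ sqn]) (use eWMW gcd_eM n_def in auto)
  have cop: "coprime d e" using gcd_de by (simp only: coprime_iff_gcd_eq_1)
  have desq: "squarefree (d * e)"
    using squarefree_mult_coprime[OF cop d_sqf] es by blast
  have de0: "d * e \<noteq> 0" using d_nz es by simp
  define g where "g = lincomb n (\<lambda>i. to_fract (qc i) / to_fract u) W"
  have gc: "g \<in> A_carrier m" unfolding g_def using Wc n1 by (intro lincomb_carrier) auto
  have hD: "h = D g" using h_deriv g_def by simp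
  have gint: "integral m g"
    unfolding integral_def
  proof (intro allI impI)
    fix a r phi assume r: "(r::nat) \<ge> 1" and rt: "puiseux_root m a r phi"
    interpret P: pzm a r m phi D
      using r rt irr der by (intro pzm.intro pz.intro pzm_axioms.intro)
    have ord: "order a (map_poly to_ac (d * e)) \<le> 1" by (rule sqf_order[OF desq])
    have Pde: "P.Pe (d * e) \<noteq> 0" using P.Pe_val[OF de0] by simp
    have "P.Pe (d * e) * P.sg (D g) = (\<Sum>i<n. P.Pe (d * e) * (subst_rf a r (to_fract (hc i) / to_fract (d * e)) * P.sg (W i)))"
      unfolding hD[symmetric] h_def lincomb_def P.sg_sum P.sg_smult sum_distrib_left ..
    also have "\<dots> = (\<Sum>i<n. P.Pe (hc i) * P.sg (W i))"
    proof (intro sum.cong refl)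
      fix i
      have "subst_rf a r (to_fract (hc i) / to_fract (d * e)) = P.Pe (hc i) / P.Pe (d * e)"
        unfolding Fract_conv_to_fract[symmetric] by (rule P.Sg_Fract[OF de0])
      thus "P.Pe (d * e) * (subst_rf a r (to_fract (hc i) / to_fract (d * e)) * P.sg (W i)) = P.Pe (hc i) * P.sg (W i)"
        using Pde by simp
    qed
    finally have eq: "P.Pe (d * e) * P.sg (D g) = (\<Sum>i<n. P.Pe (hc i) * P.sg (W i))" .
    have nn: "nng (P.Pe (d * e) * P.sg (D g))"
      unfolding eq
    proof (intro nng_sum nng_mult nngI)
      fix i assume i: "i \<in> {..<n}"
      show "0 \<le> fls_subdegree (P.Pe (hc i))" by (rule P.Pe_nonneg)
      show "0 \<le> fls_subdegree (P.sg (W i))" using Wint i r rt unfolding integral_def P.sg_def by auto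
    qed
    show "0 \<le> fls_subdegree (poly (map_poly (subst_rf a r) g) phi)"
      using P.val_bound[OF gc de0 ord nn] unfolding P.sg_def .
  qed
  obtain c where gU: "g = lincomb n (\<lambda>i. to_fract (c i)) U"
    using U_ib gc gint unfolding integral_basis_def n_def by blast
  have "g = lincomb n (\<lambda>i. to_fract (qc i) / to_fract u) (\<lambda>i. lincomb n (\<lambda>j. to_fract (T $$ (i, j))) U)"
    unfolding g_def lincomb_def[of n "\<lambda>i. to_fract (qc i) / to_fract u"]
  proof (intro sum.cong refl)
    fix i assume "i \<in> {..<n}"
    hence "W i = lincomb n (\<lambda>j. to_fract (T $$ (i, j))) U" using WTU by simp
    thus "smult (to_fract (qc i) / to_fract u) (W i) = smult (to_fract (qc i) / to_fract u) (lincomb n (\<lambda>j. to_fract (T $$ (i, j))) U)"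
      by (rule arg_cong)
  qed
  also have "\<dots> = lincomb n (\<lambda>j. \<Sum>i<n. to_fract (qc i) / to_fract u * to_fract (T $$ (i, j))) U"
    by (rule lincomb_compose)
  finally have g2: "g = lincomb n (\<lambda>j. \<Sum>i<n. to_fract (qc i) / to_fract u * to_fract (T $$ (i, j))) U" .
  have lin: "\<forall>j<n. u * c j = (\<Sum>i<n. qc i * T $$ (i, j))"
  proof (intro allI impI)
    fix j assume j: "j < n"
    have "lincomb (degree m) (\<lambda>i. to_fract (c i)) U = lincomb (degree m) (\<lambda>j. \<Sum>i<n. to_fract (qc i) / to_fract u * to_fract (T $$ (i, j))) U"
      using gU g2 unfolding n_def by simp
    from lincomb_eq[OF Ub this] j have A: "to_fract (c j) = (\<Sum>i<n. to_fract (qc i) / to_fract u * to_fract (T $$ (i, j)))"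
      unfolding n_def by simp
    have "to_fract u * to_fract (c j) = (\<Sum>i<n. to_fract u * (to_fract (qc i) / to_fract u * to_fract (T $$ (i, j))))"
      unfolding A sum_distrib_left ..
    also have "\<dots> = (\<Sum>i<n. to_fract (qc i) * to_fract (T $$ (i, j)))"
      using u_nz by (intro sum.cong refl) simp
    finally have "to_fract u * to_fract (c j) = (\<Sum>i<n. to_fract (qc i) * to_fract (T $$ (i, j)))" .
    hence "to_fract (u * c j) = to_fract (\<Sum>i<n. qc i * T $$ (i, j))" by (simp only: to_fract_mult to_fract_sum)
    thus "u * c j = (\<Sum>i<n. qc i * T $$ (i, j))" by (simp only: to_fract_eq_iff)
  qed
  have dv: "u dvd det T" by (rule dvd_detT[OF T_carrier lin gcd_qu])
  then obtain w where w: "det T = u * w" by (auto simp: dvd_def)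
  have DT: "Disc m W = to_fract (det T) ^ 2 * Disc m U"
    by (rule Disc_T) (use T_carrier WTU n_def in auto)
  show ?thesis
  proof (intro conjI dv)
    show "\<exists>c. Disc m W / Disc m U = to_fract (u ^ 2 * c)"
    proof (cases "Disc m U = 0")
      case True thus ?thesis by (intro exI[of _ 0]) simp
    next
      case False
      have "Disc m W / Disc m U = to_fract (det T) ^ 2" using False DT by simp
      also have "\<dots> = to_fract (u ^ 2 * w ^ 2)" unfolding w by (simp add: power_mult_distrib tf.hom_power)
      finally show ?thesis by blast
    qed
  qed
qed

end
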